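(* Let $f(z)=z+a_2z^2+a_3z^3+\cdots$ belong to the class $\mathcal{S}_G^{\ast}$. Then $$|a_n|\le \frac{1}{2(n-1)}\quad (n=2,3,4,5),\qquad |a_6|\le \frac{13}{48}.$$ The estimates for $|a_2|,|a_3|,|a_4|,|a_5|$ are sharp.
   Context: Let $\mathcal{U}=\{z\in\mathbb{C}:|z|<1\}$. Let $\mathcal{S}$ denote the class of functions $f$ analytic and univalent in $\mathcal{U}$ normalized by $f(0)=0$, $f'(0)=1$, i.e. $f(z)=z+\sum_{n\ge2}a_nz^n$. For analytic $g,h$ on $\mathcal{U}$, $g\prec h$ ($g$ is subordinate to $h$) means there is an analytic $w$ on $\mathcal{U}$ with $w(0)=0$, $|w(z)|<1$, and $g(z)=h(w(z))$ for $z\in\mathcal{U}$. Let $\Psi(z)=\frac{z}{\ln(1+z)}$ on $\mathcal{U}$ (principal branch of the logarithm, $\Psi(0)=1$); it is the generating function $\sum_{n\ge0}G_nz^n$ of the Gregory coefficients $G_n$. Define $\mathcal{S}_G^{\ast}=\{f\in\mathcal{S}: zf'(z)/f(z)\prec\Psi(z)\}$. "Sharp" means the bound is attained by some function in $\mathcal{S}_G^{\ast}$. *)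

theory Defs
  imports "HOL-Complex_Analysis.Complex_Analysis"
begin

abbreviation unit_disk :: "complex set" where
  "unit_disk \<equiv> ball 0 1"

definition class_S :: "(complex \<Rightarrow> complex) set" where
  "class_S = {f. f holomorphic_on unit_disk \<and> inj_on f unit_disk \<and> f 0 = 0 \<and> deriv f 0 = 1}"

definition taylor_coeff :: "(complex \<Rightarrow> complex) \<Rightarrow> nat \<Rightarrow> complex" where
  "taylor_coeff f n = (deriv ^^ n) f 0 / of_nat (fact n)"

definition subordinate :: "(complex \<Rightarrow> complex) \<Rightarrow> (complex \<Rightarrow> complex) \<Rightarrow> bool" where
  "subordinate g h \<longleftrightarrow> (\<exists>w. w holomorphic_on unit_disk \<and> w 0 = 0 \<and>
     (\<forall>z\<in>unit_disk. norm (w z) < 1) \<and> (\<forall>z\<in>unit_disk. g z = h (w z)))"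

text \<open>Psi(z) = z / log(1+z), principal branch, with Psi(0) = 1 (removable singularity).\<close>
definition Psi :: "complex \<Rightarrow> complex" where
  "Psi z = (if z = 0 then 1 else z / Ln (1 + z))"

text \<open>z f'(z)/f(z), extended by its limit value 1 at z = 0.\<close>
definition starlike_quot :: "(complex \<Rightarrow> complex) \<Rightarrow> complex \<Rightarrow> complex" where
  "starlike_quot f z = (if z = 0 then 1 else z * deriv f z / f z)"

definition class_SG :: "(complex \<Rightarrow> complex) set" where
  "class_SG = {f \<in> class_S. subordinate (starlike_quot f) Psi}"

end

theory Submission
  imports Defs
begin


lemma Ln1p_deriv0: "deriv (\<lambda>z::complex. Ln (1 + z)) 0 = 1"
proof -
  have "((\<lambda>z::complex. Ln (1 + z)) has_field_derivative inverse (1 + 0)) (at 0)"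
    by (rule derivative_eq_intros | simp)+
  then show ?thesis by (simp add: DERIV_imp_deriv)
qed

lemma one_plus_notin: "z \<in> ball (0::complex) 1 \<Longrightarrow> 1 + z \<notin> \<real>\<^sub>\<le>\<^sub>0"
proof
  assume z: "z \<in> ball (0::complex) 1" and "1 + z \<in> \<real>\<^sub>\<le>\<^sub>0"
  then have "Re (1 + z) \<le> 0" by (auto simp: complex_nonpos_Reals_iff)
  moreover have "\<bar>Re z\<bar> < 1" using z abs_Re_le_cmod[of z] by auto
  ultimately show False by simp
qed

lemma Ln1p_holo: "(\<lambda>z::complex. Ln (1 + z)) holomorphic_on ball 0 1"
  by (intro holomorphic_intros) (metis one_plus_notin mem_ball_0)

lemma Ln1p_nz: "z \<in> ball (0::complex) 1 \<Longrightarrow> z \<noteq> 0 \<Longrightarrow> Ln (1 + z) \<noteq> 0"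
  using one_plus_notin[of z] by (metis Ln_eq_zero_iff add_cancel_right_right)

definition M :: "complex \<Rightarrow> complex" where
  "M z = (if z = 0 then 1 else Ln (1 + z) / z)"

lemma M_holo: "M holomorphic_on ball 0 1"
proof -
  have "(\<lambda>z. if z = 0 then deriv (\<lambda>z::complex. Ln (1 + z)) 0
                else (Ln (1 + z) - Ln (1 + 0)) / (z - 0)) holomorphic_on ball 0 1"
    by (rule pole_lemma[OF Ln1p_holo]) auto
  also have "(\<lambda>z. if z = 0 then deriv (\<lambda>z::complex. Ln (1 + z)) 0
                else (Ln (1 + z) - Ln (1 + 0)) / (z - 0)) = M"
    by (auto simp: M_def Ln1p_deriv0 fun_eq_iff)
  finally show ?thesis .
qed

lemma M_nz: "z \<in> ball 0 1 \<Longrightarrow> M z \<noteq> 0"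
  using Ln1p_nz[of z] by (auto simp: M_def)

lemma Psi_eq: "z \<in> ball 0 1 \<Longrightarrow> Psi z = inverse (M z)"
  by (auto simp: Psi_def M_def)

lemma Psi_holo: "Psi holomorphic_on ball 0 1"
proof -
  have "(\<lambda>z. inverse (M z)) holomorphic_on ball 0 1"
    by (intro holomorphic_intros M_holo) (use M_nz in auto)
  then show ?thesis by (rule holomorphic_transform) (simp add: Psi_eq)
qed

lemma Psi_Ln: "z \<in> ball 0 1 \<Longrightarrow> Psi z * Ln (1 + z) = z"
  using Ln1p_nz[of z] by (auto simp: Psi_def)

definition L0 :: "complex fps" where "L0 = fps_expansion (\<lambda>z. Ln (1 + z)) 0"

lemma L0_has: "(\<lambda>z::complex. Ln (1 + z)) has_fps_expansion L0"
  unfolding L0_def by (rule has_fps_expansion_fps_expansion[OF _ _ Ln1p_holo]) auto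

lemma L0_deriv: "fps_deriv L0 = inverse (1 + fps_X)"
proof -
  have 1: "deriv (\<lambda>z::complex. Ln (1 + z)) has_fps_expansion fps_deriv L0"
    by (rule has_fps_expansion_deriv[OF L0_has])
  have 2: "(\<lambda>z::complex. inverse (1 + z)) has_fps_expansion inverse (1 + fps_X)"
    by (intro has_fps_expansion_inverse has_fps_expansion_add has_fps_expansion_1 has_fps_expansion_fps_X) auto
  have ev: "eventually (\<lambda>z. deriv (\<lambda>z::complex. Ln (1 + z)) z = inverse (1 + z)) (nhds 0)"
  proof -
    have "eventually (\<lambda>z::complex. z \<in> ball 0 1) (nhds 0)"
      by (intro eventually_nhds_in_open) auto
    then show ?thesis
    proof eventually_elim
      case (elim z)
      have "((\<lambda>z::complex. Ln (1 + z)) has_field_derivative inverse (1 + z)) (at z)"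
        by (rule derivative_eq_intros | use one_plus_notin[OF elim] in simp)+
      then show ?case by (rule DERIV_imp_deriv)
    qed
  qed
  from 1 have "(\<lambda>z::complex. inverse (1 + z)) has_fps_expansion fps_deriv L0"
    using has_fps_expansion_cong[OF ev refl] by simp
  with 2 show ?thesis using fps_expansion_unique_complex by blast
qed

lemma L0_nth0: "L0 $ 0 = 0"
  using fps_nth_fps_expansion[OF L0_has, of 0] by simp

lemma L0_nthSuc: "L0 $ Suc n = (-1) ^ n / of_nat (Suc n)"
proof -
  have "fps_deriv L0 $ n = (-1) ^ n"
    by (simp add: L0_deriv fps_inverse_fps_X_plus1')
  then have "of_nat (Suc n) * L0 $ Suc n = (-1) ^ n" by simp
  moreover have "(of_nat (Suc n) :: complex) \<noteq> 0" by (simp del: of_nat_Suc)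
  ultimately show ?thesis by (simp add: field_simps del: of_nat_Suc)
qed

lemma L0_vals: "L0 $ 1 = 1" "L0 $ 2 = -1/2" "L0 $ 3 = 1/3" "L0 $ 4 = -1/4" "L0 $ 5 = 1/5" "L0 $ 6 = -1/6"
  using L0_nthSuc[of 0] L0_nthSuc[of 1] L0_nthSuc[of 2] L0_nthSuc[of 3] L0_nthSuc[of 4] L0_nthSuc[of 5]
  by (simp_all add: eval_nat_numeral)

definition P :: "complex fps" where "P = fps_expansion Psi 0"

lemma P_has: "Psi has_fps_expansion P"
  unfolding P_def by (rule has_fps_expansion_fps_expansion[OF _ _ Psi_holo]) auto

lemma P_L0: "P * L0 = fps_X"
proof -
  have 1: "(\<lambda>z. Psi z * Ln (1 + z)) has_fps_expansion P * L0"
    by (intro has_fps_expansion_mult P_has L0_has)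
  have ev: "eventually (\<lambda>z. Psi z * Ln (1 + z) = z) (nhds 0)"
    using eventually_nhds_in_open[of "ball 0 1" 0] by (auto elim!: eventually_mono simp: Psi_Ln)
  have "(\<lambda>z::complex. z) has_fps_expansion P * L0"
    using has_fps_expansion_cong[OF ev refl] 1 by simp
  then show ?thesis using has_fps_expansion_fps_X fps_expansion_unique_complex by blast
qed

lemma P_eqs: "(P * L0) $ n = fps_X $ n" by (simp add: P_L0)

lemma P_vals: "P $ 0 = 1" "P $ 1 = 1/2" "P $ 2 = -1/12" "P $ 3 = 1/24" "P $ 4 = -19/720" "P $ 5 = 3/160"
proof -
  have e1: "P $ 0 = 1" using P_eqs[of 1] by (simp add: fps_mult_nth L0_nth0 L0_nthSuc)
  have e2: "P $ Suc 0 = 1/2" using P_eqs[of 2] e1 by (simp add: fps_mult_nth L0_nth0 L0_nthSuc eval_nat_numeral) (algebra)?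
  have e3: "P $ Suc (Suc 0) = -1/12" using P_eqs[of 3] e1 e2 by (simp add: fps_mult_nth L0_nth0 L0_nthSuc eval_nat_numeral) (algebra)?
  have e4: "P $ Suc (Suc (Suc 0)) = 1/24" using P_eqs[of 4] e1 e2 e3 by (simp add: fps_mult_nth L0_nth0 L0_nthSuc eval_nat_numeral) (algebra)?
  have e5: "P $ Suc (Suc (Suc (Suc 0))) = -19/720" using P_eqs[of 5] e1 e2 e3 e4 by (simp add: fps_mult_nth L0_nth0 L0_nthSuc eval_nat_numeral) (algebra)?
  have e6: "P $ Suc (Suc (Suc (Suc (Suc 0)))) = 3/160" using P_eqs[of 6] e1 e2 e3 e4 e5 by (simp add: fps_mult_nth L0_nth0 L0_nthSuc eval_nat_numeral) (algebra)?
  show "P $ 0 = 1" "P $ 1 = 1/2" "P $ 2 = -1/12" "P $ 3 = 1/24" "P $ 4 = -19/720" "P $ 5 = 3/160"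
    using e1 e2 e3 e4 e5 e6 by (simp_all add: eval_nat_numeral)
qed

lemma taylor_coeff_fps: "f has_fps_expansion F \<Longrightarrow> taylor_coeff f n = F $ n"
  by (simp add: taylor_coeff_def fps_nth_fps_expansion)

lemma P_vals': "P $ Suc 0 = 1/2" "P $ Suc (Suc 0) = -1/12" "P $ Suc (Suc (Suc 0)) = 1/24"
  "P $ Suc (Suc (Suc (Suc 0))) = -19/720" "P $ Suc (Suc (Suc (Suc (Suc 0)))) = 3/160"
  using P_vals by (simp_all add: eval_nat_numeral)

lemma compose_vals:
  fixes W :: "complex fps"
  assumes "W $ 0 = 0" "W $ Suc 0 = c1" "W $ Suc (Suc 0) = c2" "W $ Suc (Suc (Suc 0)) = c3"
    "W $ Suc (Suc (Suc (Suc 0))) = c4" "W $ Suc (Suc (Suc (Suc (Suc 0)))) = c5"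
  shows "(P oo W) $ 0 = 1"
    "(P oo W) $ 1 = c1 / 2"
    "(P oo W) $ 2 = c2/2 - c1^2/12"
    "(P oo W) $ 3 = c3/2 - c1*c2/6 + c1^3/24"
    "(P oo W) $ 4 = c4/2 - (c2^2 + 2*c1*c3)/12 + c1^2*c2/8 - 19/720*c1^4"
    "(P oo W) $ 5 = c5/2 - (2*c1*c4 + 2*c2*c3)/12 + (3*c1^2*c3 + 3*c1*c2^2)/24
         - 19/720*4*c1^3*c2 + 3/160*c1^5"
  using assms
  by (simp_all add: fps_compose_nth P_vals(1) P_vals' fps_mult_nth eval_nat_numeral)
     (simp_all add: field_simps)

lemma coeff_formulas:
  assumes hf: "f holomorphic_on ball 0 1" and f0: "f 0 = 0" and f'0: "deriv f 0 = 1"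
    and hw: "w holomorphic_on ball 0 1" and w0: "w 0 = 0"
    and eq: "\<forall>z\<in>ball 0 1. z * deriv f z = f z * Psi (w z)"
  shows "taylor_coeff f 2 = taylor_coeff w 1 / 2"
    "taylor_coeff f 3 = taylor_coeff w 2 / 4 + (taylor_coeff w 1)^2 / 12"
    "taylor_coeff f 4 = taylor_coeff w 3 / 6 + 5/72 * taylor_coeff w 1 * taylor_coeff w 2 + (taylor_coeff w 1)^3 / 72"
    "taylor_coeff f 5 = taylor_coeff w 4 / 8 + taylor_coeff w 1 * taylor_coeff w 3 / 24
        + (taylor_coeff w 2)^2 / 96 + 7/288 * (taylor_coeff w 1)^2 * taylor_coeff w 2 - (taylor_coeff w 1)^4 / 720"
    "taylor_coeff f 6 = taylor_coeff w 5 / 10 + 7/240 * taylor_coeff w 1 * taylor_coeff w 4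
        + taylor_coeff w 2 * taylor_coeff w 3 / 120 + 13/720 * (taylor_coeff w 1)^2 * taylor_coeff w 3
        + 47/2880 * taylor_coeff w 1 * (taylor_coeff w 2)^2 - 287/43200 * (taylor_coeff w 1)^3 * taylor_coeff w 2
        + 31/21600 * (taylor_coeff w 1)^5"
proof -
  define A where "A = fps_expansion f 0"
  define W where "W = fps_expansion w 0"
  have hA: "f has_fps_expansion A" unfolding A_def
    by (rule has_fps_expansion_fps_expansion[OF _ _ hf]) auto
  have hW: "w has_fps_expansion W" unfolding W_def
    by (rule has_fps_expansion_fps_expansion[OF _ _ hw]) auto
  have W0: "W $ 0 = 0" using taylor_coeff_fps[OF hW, of 0] w0 by (simp add: taylor_coeff_def)
  have A0: "A $ 0 = 0" using taylor_coeff_fps[OF hA, of 0] f0 by (simp add: taylor_coeff_def)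
  have A1: "A $ Suc 0 = 1" using taylor_coeff_fps[OF hA, of 1] f'0 by (simp add: taylor_coeff_def)
  have hPW: "(Psi \<circ> w) has_fps_expansion (P oo W)"
    by (rule has_fps_expansion_compose[OF P_has hW W0])
  have h1: "(\<lambda>z. z * deriv f z) has_fps_expansion fps_X * fps_deriv A"
    by (intro has_fps_expansion_mult has_fps_expansion_fps_X has_fps_expansion_deriv hA)
  have h2: "(\<lambda>z. f z * (Psi \<circ> w) z) has_fps_expansion A * (P oo W)"
    by (intro has_fps_expansion_mult hA hPW)
  have ev: "eventually (\<lambda>z. f z * (Psi \<circ> w) z = z * deriv f z) (nhds 0)"
    using eventually_nhds_in_open[of "ball 0 1" 0] eq by (auto elim!: eventually_mono)
  have "(\<lambda>z. z * deriv f z) has_fps_expansion A * (P oo W)"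
    using has_fps_expansion_cong[OF ev refl] h2 by simp
  with h1 have key: "fps_X * fps_deriv A = A * (P oo W)"
    using fps_expansion_unique_complex by blast
  define c1 where "c1 = W $ Suc 0"
  define c2 where "c2 = W $ Suc (Suc 0)"
  define c3 where "c3 = W $ Suc (Suc (Suc 0))"
  define c4 where "c4 = W $ Suc (Suc (Suc (Suc 0)))"
  define c5 where "c5 = W $ Suc (Suc (Suc (Suc (Suc 0))))"
  note Q = compose_vals[OF W0 c1_def[symmetric] c2_def[symmetric] c3_def[symmetric] c4_def[symmetric] c5_def[symmetric]]
  define q1 where "q1 = (P oo W) $ Suc 0"
  define q2 where "q2 = (P oo W) $ Suc (Suc 0)"
  define q3 where "q3 = (P oo W) $ Suc (Suc (Suc 0))"
  define q4 where "q4 = (P oo W) $ Suc (Suc (Suc (Suc 0)))"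
  define q5 where "q5 = (P oo W) $ Suc (Suc (Suc (Suc (Suc 0))))"
  define a2 where "a2 = A $ Suc (Suc 0)"
  define a3 where "a3 = A $ Suc (Suc (Suc 0))"
  define a4 where "a4 = A $ Suc (Suc (Suc (Suc 0)))"
  define a5 where "a5 = A $ Suc (Suc (Suc (Suc (Suc 0))))"
  define a6 where "a6 = A $ Suc (Suc (Suc (Suc (Suc (Suc 0)))))"
  have q0: "(P oo W) $ 0 = 1" by (rule Q(1))
  have qv: "q1 = c1/2" "q2 = c2/2 - c1^2/12" "q3 = c3/2 - c1*c2/6 + c1^3/24"
    "q4 = c4/2 - (c2^2 + 2*c1*c3)/12 + c1^2*c2/8 - 19/720*c1^4"
    "q5 = c5/2 - (2*c1*c4 + 2*c2*c3)/12 + (3*c1^2*c3 + 3*c1*c2^2)/24 - 19/720*4*c1^3*c2 + 3/160*c1^5"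
    using Q(2-6) unfolding q1_def q2_def q3_def q4_def q5_def by (simp_all add: eval_nat_numeral)
  have E: "\<And>n. (fps_X * fps_deriv A) $ n = (A * (P oo W)) $ n" using key by simp
  have E2: "2 * a2 = a2 + q1" using E[of 2] A0 A1 q0
    by (simp add: fps_mult_nth eval_nat_numeral a2_def q1_def)
  have E3: "3 * a3 = a3 + a2 * q1 + q2" using E[of 3] A0 A1 q0
    by (simp add: fps_mult_nth eval_nat_numeral a2_def a3_def q1_def q2_def)
  have E4: "4 * a4 = a4 + a3 * q1 + a2 * q2 + q3" using E[of 4] A0 A1 q0
    by (simp add: fps_mult_nth eval_nat_numeral a2_def a3_def a4_def q1_def q2_def q3_def)
  have E5: "5 * a5 = a5 + a4 * q1 + a3 * q2 + a2 * q3 + q4" using E[of 5] A0 A1 q0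
    by (simp add: fps_mult_nth eval_nat_numeral a2_def a3_def a4_def a5_def q1_def q2_def q3_def q4_def)
  have E6: "6 * a6 = a6 + a5 * q1 + a4 * q2 + a3 * q3 + a2 * q4 + q5" using E[of 6] A0 A1 q0
    by (simp add: fps_mult_nth eval_nat_numeral a2_def a3_def a4_def a5_def a6_def q1_def q2_def q3_def q4_def q5_def)
  have s3: "a3 = (a2 * q1 + q2) / 2" using E3 by (simp add: field_simps)
  have s4: "a4 = (a3 * q1 + a2 * q2 + q3) / 3" using E4 by (simp add: field_simps)
  have s5: "a5 = (a4 * q1 + a3 * q2 + a2 * q3 + q4) / 4" using E5 by (simp add: field_simps)
  have s6: "a6 = (a5 * q1 + a4 * q2 + a3 * q3 + a2 * q4 + q5) / 5" using E6 by (simp add: field_simps)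
  have r2: "a2 = c1 / 2" using E2 qv by simp
  have r3: "a3 = c2 / 4 + c1^2 / 12" unfolding s3 r2 qv by (simp add: field_simps power2_eq_square)
  have r4: "a4 = c3 / 6 + 5/72 * c1 * c2 + c1^3 / 72" unfolding s4 r3 r2 qv
    by (simp add: field_simps power2_eq_square power3_eq_cube)
  have r5: "a5 = c4 / 8 + c1 * c3 / 24 + c2^2 / 96 + 7/288 * c1^2 * c2 - c1^4 / 720" unfolding s5 r4 r3 r2 qv
    by (simp add: field_simps eval_nat_numeral)
  have r6: "a6 = c5 / 10 + 7/240 * c1 * c4 + c2 * c3 / 120 + 13/720 * c1^2 * c3
        + 47/2880 * c1 * c2^2 - 287/43200 * c1^3 * c2 + 31/21600 * c1^5" unfolding s6 r5 r4 r3 r2 qv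
    by (simp add: field_simps eval_nat_numeral)
  have tf: "\<And>n. taylor_coeff f n = A $ n" by (rule taylor_coeff_fps[OF hA])
  have tw: "\<And>n. taylor_coeff w n = W $ n" by (rule taylor_coeff_fps[OF hW])
  note defs = tf tw a2_def a3_def a4_def a5_def a6_def c1_def c2_def c3_def c4_def c5_def
  show "taylor_coeff f 2 = taylor_coeff w 1 / 2" using r2 by (simp add: defs eval_nat_numeral)
  show "taylor_coeff f 3 = taylor_coeff w 2 / 4 + (taylor_coeff w 1)^2 / 12"
    using r3 by (simp add: defs eval_nat_numeral)
  show "taylor_coeff f 4 = taylor_coeff w 3 / 6 + 5/72 * taylor_coeff w 1 * taylor_coeff w 2 + (taylor_coeff w 1)^3 / 72"
    using r4 by (simp add: defs eval_nat_numeral)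
  show "taylor_coeff f 5 = taylor_coeff w 4 / 8 + taylor_coeff w 1 * taylor_coeff w 3 / 24
        + (taylor_coeff w 2)^2 / 96 + 7/288 * (taylor_coeff w 1)^2 * taylor_coeff w 2 - (taylor_coeff w 1)^4 / 720"
    using r5 by (simp add: defs eval_nat_numeral)
  show "taylor_coeff f 6 = taylor_coeff w 5 / 10 + 7/240 * taylor_coeff w 1 * taylor_coeff w 4
        + taylor_coeff w 2 * taylor_coeff w 3 / 120 + 13/720 * (taylor_coeff w 1)^2 * taylor_coeff w 3
        + 47/2880 * taylor_coeff w 1 * (taylor_coeff w 2)^2 - 287/43200 * (taylor_coeff w 1)^3 * taylor_coeff w 2
        + 31/21600 * (taylor_coeff w 1)^5"
    using r6 by (simp add: defs eval_nat_numeral)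
qed


lemma re_ineq: "Re (cnj a * (2*b - a)) \<le> (cmod b)^2"
proof -
  have e1: "(cmod b)^2 = (Re b)^2 + (Im b)^2" by (simp add: cmod_power2)
  have e2: "Re (cnj a * (2*b - a)) = 2*(Re a*Re b + Im a*Im b) - (Re a)^2 - (Im a)^2"
    by (simp add: algebra_simps power2_eq_square)
  have "0 \<le> (Re b - Re a)^2 + (Im b - Im a)^2" by simp
  then show ?thesis unfolding e1 e2 power2_diff by (simp add: algebra_simps)
qed

lemma taylor_coeff_fps': "f has_fps_expansion F \<Longrightarrow> F $ n = taylor_coeff f n"
  by (simp add: taylor_coeff_def fps_nth_fps_expansion)

lemma S_r_bound:
  assumes hw: "w holomorphic_on ball 0 1" and wb: "\<forall>z\<in>ball 0 1. cmod (w z) \<le> 1"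
    and r: "0 < r" "r < 1"
  shows "(\<Sum>k\<le>N. (cmod (taylor_coeff w k))^2 * r^(2*k)) \<le> 1"
proof -
  define c where "c = taylor_coeff w"
  define T where "T = (\<lambda>z. \<Sum>j\<le>N. c j * z^j)"
  define F where "F = (\<lambda>z. 2 * w z - T z)"
  have hF: "F holomorphic_on ball 0 1" unfolding F_def T_def by (intro holomorphic_intros hw)
  define Wf where "Wf = fps_expansion w 0"
  have hW: "w has_fps_expansion Wf" unfolding Wf_def
    by (rule has_fps_expansion_fps_expansion[OF _ _ hw]) auto
  have hT: "T has_fps_expansion (\<Sum>j\<le>N. fps_const (c j) * fps_X^j)" unfolding T_def
    by (intro has_fps_expansion_sum has_fps_expansion_cmult_left has_fps_expansion_fps_X_power)
  have hF': "F has_fps_expansion (fps_const 2 * Wf - (\<Sum>j\<le>N. fps_const (c j) * fps_X^j))"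
    unfolding F_def by (intro has_fps_expansion_diff has_fps_expansion_cmult_left hW hT)
  have Fk: "(deriv^^k) F 0 = c k * fact k" if "k \<le> N" for k
  proof -
    have "(deriv^^k) F 0 / fact k = (fps_const 2 * Wf - (\<Sum>j\<le>N. fps_const (c j) * fps_X^j)) $ k"
      using fps_nth_fps_expansion[OF hF'] by simp
    also have "\<dots> = 2 * c k - c k"
      using that by (simp add: fps_sum_nth taylor_coeff_fps'[OF hW] c_def if_distrib)
    finally show ?thesis by (simp add: field_simps)
  qed
  have cont: "continuous_on (cball 0 r) F"
    by (rule holomorphic_on_imp_continuous_on, rule holomorphic_on_subset[OF hF]) (use r in auto)
  have hol: "F holomorphic_on ball 0 r"
    by (rule holomorphic_on_subset[OF hF]) (use r in auto)
  define H where "H = (\<lambda>z. \<Sum>k\<le>N. cnj (c k) * r^(2*k) * (F z / (z - 0)^(Suc k)))"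
  have cint: "(H has_contour_integral
      (\<Sum>k\<le>N. cnj (c k) * r^(2*k) * ((2*pi*\<i>) / fact k * (deriv^^k) F 0))) (circlepath 0 r)"
    unfolding H_def
    by (intro has_contour_integral_sum has_contour_integral_lmul
          Cauchy_has_contour_integral_higher_derivative_circlepath cont hol) (use r in auto)
  define S where "S = (\<Sum>k\<le>N. (cmod (c k))^2 * r^(2*k))"
  have "(\<Sum>k\<le>N. cnj (c k) * r^(2*k) * ((2*pi*\<i>) / fact k * (deriv^^k) F 0))
        = (\<Sum>k\<le>N. (2*pi*\<i>) * complex_of_real ((cmod (c k))^2 * r^(2*k)))"
  proof (rule sum.cong[OF refl])
    fix k assume "k \<in> {..N}"
    then have "(deriv^^k) F 0 = c k * fact k" by (intro Fk) auto
    moreover have "cnj (c k) * c k = complex_of_real ((cmod (c k))^2)"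
      by (metis complex_norm_square mult.commute of_real_power)
    ultimately show "cnj (c k) * r^(2*k) * ((2*pi*\<i>) / fact k * (deriv^^k) F 0)
        = (2*pi*\<i>) * complex_of_real ((cmod (c k))^2 * r^(2*k))"
      by (simp add: field_simps)
  qed
  also have "\<dots> = (2*pi*\<i>) * complex_of_real S"
    by (simp add: S_def sum_distrib_left)
  finally have cint2: "(H has_contour_integral (2*pi*\<i>) * complex_of_real S) (circlepath 0 r)"
    using cint by simp
  define K where "K = (\<lambda>x. H (circlepath 0 r x) * circlepath 0 r x)"
  have "((\<lambda>x. H (circlepath 0 r x) * vector_derivative (circlepath 0 r) (at x within {0..1}))
          has_integral (2*pi*\<i>) * complex_of_real S) {0..1}"
    using cint2 by (simp add: has_contour_integral_def)
  then have "((\<lambda>x. (2*pi*\<i>) * K x) has_integral (2*pi*\<i>) * complex_of_real S) {0..1}"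
    by (rule has_integral_spike_eq[of "{}", THEN iffD1, rotated 2])
       (auto simp: K_def vector_derivative_circlepath01, simp add: circlepath)
  then have "((\<lambda>x. inverse (2*pi*\<i>) * ((2*pi*\<i>) * K x)) has_integral
        inverse (2*pi*\<i>) * ((2*pi*\<i>) * complex_of_real S)) {0..1}"
    by (rule has_integral_mult_right)
  then have KS: "(K has_integral complex_of_real S) {0..1}"
    by (simp add: field_simps)
  have ReKS: "((Re \<circ> K) has_integral S) {0..1}"
    using has_integral_linear[OF KS bounded_linear_Re] by simp
  have Kle: "(Re \<circ> K) x \<le> 1" if "x \<in> {0..1}" for x
  proof -
    define z where "z = circlepath 0 r x"
    have nz: "cmod z = r" using r by (simp add: z_def circlepath norm_mult)
    then have z0: "z \<noteq> 0" using r by auto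
    have cz: "cnj z = r^2 / z"
    proof -
      have "z * cnj z = complex_of_real (r^2)" using nz by (simp add: complex_mult_cnj cmod_power2[symmetric])
      then show ?thesis using z0 by (simp add: field_simps)
    qed
    have "K x = H z * z" by (simp add: K_def z_def)
    also have "\<dots> = (\<Sum>k\<le>N. cnj (c k) * (r^2/z)^k) * F z"
      unfolding H_def sum_distrib_right
    proof (rule sum.cong[OF refl])
      fix k
      show "cnj (c k) * r ^ (2 * k) * (F z / (z - 0) ^ Suc k) * z = cnj (c k) * (r^2/z)^k * F z"
        using z0 by (simp add: field_simps power_mult power_divide flip: power_mult_distrib) (simp add: power_mult[symmetric] mult.commute)
    qed
    also have "(\<Sum>k\<le>N. cnj (c k) * (r^2/z)^k) = cnj (T z)"
      by (simp add: T_def cz)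
    finally have "K x = cnj (T z) * (2 * w z - T z)" by (simp add: F_def)
    then have "Re (K x) \<le> (cmod (w z))^2" using re_ineq by simp
    also have "\<dots> \<le> 1" using wb nz r
      by (metis abs_norm_cancel mem_ball_0 norm_ge_zero power_le_one)
    finally show ?thesis by simp
  qed
  have one: "((\<lambda>x. 1::real) has_integral 1) {0..1::real}"
    using has_integral_const_real[of "1::real" 0 1] by simp
  have "S \<le> 1" by (rule has_integral_le[OF ReKS one Kle])
  then show ?thesis by (simp add: S_def c_def)
qed


lemma coeff_sq_sum:
  assumes hw: "w holomorphic_on ball 0 1" and wb: "\<forall>z\<in>ball 0 1. cmod (w z) \<le> 1"
  shows "(\<Sum>k\<le>N. (cmod (taylor_coeff w k))^2) \<le> 1"
proof -
  define g where "g = (\<lambda>r::real. \<Sum>k\<le>N. (cmod (taylor_coeff w k))^2 * r^(2*k))"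
  have "isCont g 1" unfolding g_def by (intro continuous_intros)
  then have lim: "(g \<longlongrightarrow> g 1) (at_left 1)"
    by (simp add: isCont_def filterlim_at_split)
  have ev: "eventually (\<lambda>r. g r \<le> 1) (at_left (1::real))"
  proof -
    have "\<forall>r\<in>{0<..<1}. g r \<le> 1" unfolding g_def using S_r_bound[OF hw wb] by auto
    then show "eventually (\<lambda>r. g r \<le> 1) (at_left (1::real))"
      using eventually_at_left_real[of 0 1] by (auto elim!: eventually_mono)
  qed
  have "g 1 \<le> 1" by (rule tendsto_upperbound[OF lim ev]) simp
  then show ?thesis by (simp add: g_def)
qed

lemma sqrt_bound:
  fixes x s :: real
  assumes "0 \<le> x" "0 \<le> s" "s \<le> 1" "x^2 \<le> 1 - s"
  shows "x \<le> 1 - s/2"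
proof -
  have e: "(1 - s/2)^2 = 1 - s + s^2/4" by (simp add: power2_eq_square field_simps)
  have "0 \<le> s^2/4" by simp
  then have a: "x^2 \<le> (1 - s/2)^2" using assms(4) e by linarith
  have b: "0 \<le> 1 - s/2" using assms by simp
  show ?thesis using power2_le_imp_le[OF a b] .
qed
lemma tri_add: "norm a \<le> A \<Longrightarrow> norm b \<le> B \<Longrightarrow> norm ((a::complex) + b) \<le> A + B"
  by (intro norm_triangle_le add_mono)
lemma tri_diff: "norm a \<le> A \<Longrightarrow> norm b \<le> B \<Longrightarrow> norm ((a::complex) - b) \<le> A + B"
  by (rule order_trans[OF norm_triangle_ineq4 add_mono])

lemma ineq3:
  fixes x1 x2 :: real
  assumes "0 \<le> x1" "0 \<le> x2" "x1^2 + x2^2 \<le> 1"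
  shows "x2/4 + x1^2/12 \<le> 1/4"
proof -
  have "0 \<le> x1^2" "0 \<le> x2^2" by simp_all
  then have "x2 \<le> 1 - x1^2/2" using sqrt_bound[of x2 "x1^2"] assms by linarith
  then show ?thesis using \<open>0 \<le> x1^2\<close> by linarith
qed

lemma lin4: fixes x3 A B P T :: real
  shows "x3 \<le> 1 - (A + B)/2 \<Longrightarrow> 2 * P \<le> A + B \<Longrightarrow> T \<le> A \<Longrightarrow> 0 \<le> A \<Longrightarrow> 0 \<le> B
   \<Longrightarrow> x3/6 + 5/72 * P + T/72 \<le> 1/6"
  by argo

lemma ineq4:
  fixes x1 x2 x3 :: real
  assumes "0 \<le> x1" "0 \<le> x2" "0 \<le> x3" "x1^2 + x2^2 + x3^2 \<le> 1"
  shows "x3/6 + 5/72 * (x1 * x2) + x1^3/72 \<le> 1/6"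
proof -
  have q: "0 \<le> x1^2" "0 \<le> x2^2" "0 \<le> x3^2" by simp_all
  have s: "x1^2 + x2^2 \<le> 1" using assms q by linarith
  have h1: "x3 \<le> 1 - (x1^2 + x2^2)/2" using sqrt_bound[of x3 "x1^2 + x2^2"] assms s q by linarith
  have h2: "2 * (x1 * x2) \<le> x1^2 + x2^2" using sum_squares_bound[of x1 x2] by (simp add: mult.assoc)
  have "x1^2 \<le> 1" using s q by linarith
  then have x1: "x1 \<le> 1" using power_le_one_iff[of x1 2] assms(1) by simp
  have h3: "x1^3 \<le> x1^2" using power_decreasing[of 2 3 x1] x1 assms(1) by simp
  show ?thesis by (rule lin4[OF h1 h2 h3 q(1) q(2)])
qed

lemma lin5: fixes x4 A B C P Q R :: real
  shows "x4 \<le> 1 - (A + B + C)/2 \<Longrightarrow> 2 * P \<le> A + C \<Longrightarrow> Q \<le> A \<Longrightarrow> R \<le> A \<Longrightarrow> 0 \<le> A \<Longrightarrow> 0 \<le> B \<Longrightarrow> 0 \<le> C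
   \<Longrightarrow> x4/8 + P/24 + B/96 + 7/288 * Q + R/720 \<le> 1/8"
  by argo

lemma ineq5:
  fixes x1 x2 x3 x4 :: real
  assumes "0 \<le> x1" "0 \<le> x2" "0 \<le> x3" "0 \<le> x4" "x1^2 + x2^2 + x3^2 + x4^2 \<le> 1"
  shows "x4/8 + (x1 * x3)/24 + x2^2/96 + 7/288 * (x1^2 * x2) + x1^4/720 \<le> 1/8"
proof -
  have q: "0 \<le> x1^2" "0 \<le> x2^2" "0 \<le> x3^2" "0 \<le> x4^2" by simp_all
  have s: "x1^2 + x2^2 + x3^2 \<le> 1" using assms q by linarith
  have h1: "x4 \<le> 1 - (x1^2 + x2^2 + x3^2)/2" using sqrt_bound[of x4 "x1^2 + x2^2 + x3^2"] assms s q by linarith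
  have h2: "2 * (x1 * x3) \<le> x1^2 + x3^2" using sum_squares_bound[of x1 x3] by (simp add: mult.assoc)
  have "x1^2 \<le> 1" "x2^2 \<le> 1" using s q by linarith+
  then have x1: "x1 \<le> 1" and x2: "x2 \<le> 1" using power_le_one_iff[of x1 2] power_le_one_iff[of x2 2] assms(1,2) by simp_all
  have h3: "x1^2 * x2 \<le> x1^2" using mult_left_le[OF x2 q(1)] .
  have h4: "x1^4 \<le> x1^2" using power_decreasing[of 2 4 x1] x1 assms(1) by simp
  show ?thesis by (rule lin5[OF h1 h2 h3 h4 q(1) q(2) q(3)])
qed

lemma ineq6:
  fixes x1 x2 x3 x4 x5 :: real
  assumes "0 \<le> x1" "0 \<le> x2" "0 \<le> x3" "0 \<le> x4" "0 \<le> x5"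
    "x1 \<le> 1" "x2 \<le> 1" "x3 \<le> 1" "x4 \<le> 1" "x5 \<le> 1"
  shows "x5/10 + 7/240 * (x1 * x4) + (x2 * x3)/120 + 13/720 * (x1^2 * x3) + 47/2880 * (x1 * x2^2)
     + 287/43200 * (x1^3 * x2) + 31/21600 * x1^5 \<le> 13/48"
proof -
  have p: "x1 * x4 \<le> 1" "x2 * x3 \<le> 1" "x1^2 * x3 \<le> 1" "x1 * x2^2 \<le> 1" "x1^3 * x2 \<le> 1" "x1^5 \<le> 1"
    using assms by (simp_all add: mult_le_one power_le_one)
  then show ?thesis using assms(10) by argo
qed


lemma SG_props:
  assumes "f \<in> class_SG"
  obtains w where "f holomorphic_on ball 0 1" "f 0 = 0" "deriv f 0 = 1" "inj_on f (ball 0 1)"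
    "w holomorphic_on ball 0 1" "w 0 = 0" "\<forall>z\<in>ball 0 1. cmod (w z) < 1"
    "\<forall>z\<in>ball 0 1. z * deriv f z = f z * Psi (w z)"
proof -
  from assms have f: "f holomorphic_on ball 0 1" "inj_on f (ball 0 1)" "f 0 = 0" "deriv f 0 = 1"
    and sub: "subordinate (starlike_quot f) Psi"
    by (auto simp: class_SG_def class_S_def)
  from sub obtain w where w: "w holomorphic_on ball 0 1" "w 0 = 0" "\<forall>z\<in>ball 0 1. cmod (w z) < 1"
    "\<forall>z\<in>ball 0 1. starlike_quot f z = Psi (w z)"
    by (auto simp: subordinate_def)
  have "\<forall>z\<in>ball 0 1. z * deriv f z = f z * Psi (w z)"
  proof
    fix z :: complex assume z: "z \<in> ball 0 1"
    show "z * deriv f z = f z * Psi (w z)"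
    proof (cases "z = 0")
      case True then show ?thesis using f by simp
    next
      case False
      have "f z \<noteq> 0" using f(2,3) z False by (metis centre_in_ball inj_on_def zero_less_one)
      moreover have "starlike_quot f z = Psi (w z)" using w(4) z by blast
      then have "z * deriv f z / f z = Psi (w z)" using False by (simp add: starlike_quot_def)
      ultimately show ?thesis by (simp add: field_simps)
    qed
  qed
  with f w show ?thesis using that by blast
qed

lemma upper_bounds:
  assumes "f \<in> class_SG"
  shows "(\<forall>n\<in>{2..5::nat}. norm (taylor_coeff f n) \<le> 1 / (2 * (real n - 1))) \<and>
         norm (taylor_coeff f 6) \<le> 13 / 48"
proof -
  obtain w where f: "f holomorphic_on ball 0 1" "f 0 = 0" "deriv f 0 = 1"
    and w: "w holomorphic_on ball 0 1" "w 0 = 0" "\<forall>z\<in>ball 0 1. cmod (w z) < 1"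
    and eq: "\<forall>z\<in>ball 0 1. z * deriv f z = f z * Psi (w z)"
    using SG_props[OF assms] by metis
  note cf = coeff_formulas[OF f w(1,2) eq]
  define x where "x = (\<lambda>k. cmod (taylor_coeff w k))"
  have x0: "\<And>k. 0 \<le> x k" by (simp add: x_def)
  have xn: "0 \<le> x 1" "0 \<le> x 2" "0 \<le> x 3" "0 \<le> x 4" "0 \<le> x 5" by (simp_all add: x0)
  have "(\<Sum>k\<le>5. (x k)^2) \<le> 1" unfolding x_def
    by (rule coeff_sq_sum[OF w(1)]) (use w(3) in \<open>auto intro: less_imp_le\<close>)
  moreover have "(\<Sum>k\<le>5. (x k)^2) = (x 0)^2 + (x 1)^2 + (x 2)^2 + (x 3)^2 + (x 4)^2 + (x 5)^2"
    by (simp add: atMost_nat_numeral)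
  ultimately have S: "(x 1)^2 + (x 2)^2 + (x 3)^2 + (x 4)^2 + (x 5)^2 \<le> 1"
    using zero_le_power2[of "x 0"] by linarith
  have sq: "(x 1)^2 \<ge> 0" "(x 2)^2 \<ge> 0" "(x 3)^2 \<ge> 0" "(x 4)^2 \<ge> 0" "(x 5)^2 \<ge> 0" by simp_all
  have sq1: "(x 1)^2 \<le> 1" "(x 2)^2 \<le> 1" "(x 3)^2 \<le> 1" "(x 4)^2 \<le> 1" "(x 5)^2 \<le> 1"
    using S sq by linarith+
  have le1: "x k \<le> 1" if "k \<in> {1,2,3,4,5}" for k
  proof -
    have "(x k)^2 \<le> 1" using sq1 that by blast
    then show ?thesis using power_le_one_iff[of "x k" 2] x0[of k] by simp
  qed
  have "norm (taylor_coeff f 2) = x 1 / 2" unfolding cf(1) by (simp add: x_def norm_divide)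
  then have b2: "norm (taylor_coeff f 2) \<le> 1/2" using le1[of 1] by simp
  have b3: "norm (taylor_coeff f 3) \<le> 1/4"
  proof -
    have "norm (taylor_coeff f 3) \<le> x 2 / 4 + (x 1)^2 / 12"
      unfolding cf(2) by (intro tri_add tri_diff) (simp_all add: x_def norm_divide norm_mult norm_power)
    also have "\<dots> \<le> 1/4" by (rule ineq3) (use xn S sq in linarith)+
    finally show ?thesis .
  qed
  have b4: "norm (taylor_coeff f 4) \<le> 1/6"
  proof -
    have "norm (taylor_coeff f 4) \<le> x 3 / 6 + 5/72 * (x 1 * x 2) + (x 1)^3 / 72"
      unfolding cf(3) by (intro tri_add tri_diff) (simp_all add: x_def norm_divide norm_mult norm_power)
    also have "\<dots> \<le> 1/6" by (rule ineq4) (use xn S sq in linarith)+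
    finally show ?thesis .
  qed
  have b5: "norm (taylor_coeff f 5) \<le> 1/8"
  proof -
    have "norm (taylor_coeff f 5) \<le> x 4 / 8 + (x 1 * x 3) / 24 + (x 2)^2 / 96 + 7/288 * ((x 1)^2 * x 2) + (x 1)^4 / 720"
      unfolding cf(4) by (intro tri_add tri_diff) (simp_all add: x_def norm_divide norm_mult norm_power)
    also have "\<dots> \<le> 1/8" by (rule ineq5) (use xn S sq in linarith)+
    finally show ?thesis .
  qed
  have b6: "norm (taylor_coeff f 6) \<le> 13/48"
  proof -
    have "norm (taylor_coeff f 6) \<le> x 5 / 10 + 7/240 * (x 1 * x 4) + (x 2 * x 3) / 120 + 13/720 * ((x 1)^2 * x 3)
        + 47/2880 * (x 1 * (x 2)^2) + 287/43200 * ((x 1)^3 * x 2) + 31/21600 * (x 1)^5"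
      unfolding cf(5) by (intro tri_add tri_diff) (simp_all add: x_def norm_divide norm_mult norm_power)
    also have "\<dots> \<le> 13/48" by (rule ineq6) (use x0 le1 in auto)
    finally show ?thesis .
  qed
  have "\<forall>n\<in>{2..5::nat}. norm (taylor_coeff f n) \<le> 1 / (2 * (real n - 1))"
  proof
    fix n :: nat assume "n \<in> {2..5}"
    then have "n = 2 \<or> n = 3 \<or> n = 4 \<or> n = 5" by auto
    then show "norm (taylor_coeff f n) \<le> 1 / (2 * (real n - 1))"
      using b2 b3 b4 b5 by auto
  qed
  with b6 show ?thesis by blast
qed


lemma re_line_deriv:
  fixes g :: "complex \<Rightarrow> complex"
  assumes "(g has_field_derivative g') (at (a + of_real t * d))"
  shows "((\<lambda>t. Re (c * g (a + of_real t * d))) has_real_derivative Re (c * (g' * d))) (at t)"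
proof -
  have l: "((\<lambda>z. a + z * d) has_field_derivative d) (at (of_real t))"
    by (rule derivative_eq_intros | simp)+
  have "((\<lambda>z. g (a + z * d)) has_field_derivative g' * d) (at (of_real t))"
    using DERIV_chain2[of g g' "\<lambda>z. a + z * d" "of_real t" d] assms l by simp
  then have "((\<lambda>x. g (a + of_real x * d)) has_vector_derivative g' * d) (at t)"
    by (rule has_vector_derivative_real_field)
  moreover have bl: "bounded_linear (\<lambda>x. Re (c * x))"
    by (intro bounded_linear_compose[OF bounded_linear_Re] bounded_linear_mult_right)
  ultimately have "((\<lambda>x. Re (c * g (a + of_real x * d))) has_vector_derivative Re (c * (g' * d))) (at t)"
    using bounded_linear.has_vector_derivative[OF bl] by blast
  then show ?thesis by (simp add: has_real_derivative_iff_has_vector_derivative)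
qed

lemma NW_line:
  fixes g g' :: "complex \<Rightarrow> complex"
  assumes der: "\<forall>t\<in>{0..1}. (g has_field_derivative g' (a + of_real t * d)) (at (a + of_real t * d))"
   and pos: "\<forall>t\<in>{0..1}. Re (g' (a + of_real t * d)) > 0" and d: "d \<noteq> 0"
  shows "Re (cnj d * g a) < Re (cnj d * g (a + d))"
proof -
  define u where "u = (\<lambda>t. Re (cnj d * g (a + of_real t * d)))"
  have "u 0 < u 1"
  proof (rule DERIV_pos_imp_increasing[of 0 1 u])
    fix t :: real assume t: "0 \<le> t" "t \<le> 1"
    have "(u has_real_derivative Re (cnj d * (g' (a + of_real t * d) * d))) (at t)"
      unfolding u_def by (rule re_line_deriv) (use der t in auto)
    moreover have "Re (cnj d * (g' (a + of_real t * d) * d)) = (cmod d)^2 * Re (g' (a + of_real t * d))"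
    proof -
      define G where "G = g' (a + of_real t * d)"
      have "cnj d * (G * d) = (d * cnj d) * G" by (simp add: mult_ac)
      also have "d * cnj d = complex_of_real ((cmod d)^2)" by (rule complex_norm_square[symmetric])
      finally have e: "cnj d * (G * d) = complex_of_real ((cmod d)^2) * G" .
      have ReM: "\<And>r G. Re (complex_of_real r * G) = r * Re G" by simp
      show ?thesis unfolding G_def[symmetric] by (subst e) (rule ReM)
    qed
    moreover have "(cmod d)^2 * Re (g' (a + of_real t * d)) > 0" using pos t d by simp
    ultimately show "\<exists>y. (u has_real_derivative y) (at t) \<and> 0 < y" by auto
  qed simp
  then show ?thesis unfolding u_def by simp
qed

lemma Re_inverse_pos: "Re w > 0 \<Longrightarrow> Re (inverse w) > 0"
proof -
  assume w: "Re w > 0"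
  then have "w \<noteq> 0" by auto
  then have "cmod w > 0" by simp
  have "Re (inverse w) = Re w / (cmod w)^2" by (simp add: inverse_eq_divide Re_divide cmod_power2)
  then show ?thesis using w \<open>cmod w > 0\<close> by simp
qed


lemma Re_Ln_pos:
  assumes z: "cmod z < 1" "z \<noteq> 0"
  shows "Re (cnj z * Ln (1 + z)) > 0"
proof -
  have seg: "cmod (of_real t * z) < 1" if "t \<in> {0..1}" for t :: real
  proof -
    have "cmod (of_real t * z) = \<bar>t\<bar> * cmod z" by (simp add: norm_mult)
    also have "\<dots> \<le> cmod z" using that by (simp add: mult_left_le_one_le)
    finally show ?thesis using z by simp
  qed
  have re1: "Re (1 + of_real t * z) > 0" if "t \<in> {0..1}" for t :: real
  proof -
    have "\<bar>Re (of_real t * z)\<bar> \<le> cmod (of_real t * z)" by (rule abs_Re_le_cmod)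
    then show ?thesis using seg[OF that] by simp
  qed
  have "Re (cnj z * Ln (1 + 0)) < Re (cnj z * Ln (1 + (0 + z)))"
  proof (rule NW_line[where g = "\<lambda>u. Ln (1 + u)" and g' = "\<lambda>u. inverse (1 + u)" and a = 0 and d = z])
    show "\<forall>t\<in>{0..1}. ((\<lambda>u. Ln (1 + u)) has_field_derivative inverse (1 + (0 + of_real t * z))) (at (0 + of_real t * z))"
    proof
      fix t :: real assume t: "t \<in> {0..1}"
      have "1 + of_real t * z \<notin> \<real>\<^sub>\<le>\<^sub>0" using re1[OF t] by (auto simp: complex_nonpos_Reals_iff)
      then show "((\<lambda>u. Ln (1 + u)) has_field_derivative inverse (1 + (0 + of_real t * z))) (at (0 + of_real t * z))"
        by (auto intro!: derivative_eq_intros)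
    qed
    show "\<forall>t\<in>{0..1}. 0 < Re (inverse (1 + (0 + of_real t * z)))"
    proof
      fix t :: real assume t: "t \<in> {0..1}"
      show "0 < Re (inverse (1 + (0 + of_real t * z)))"
        using Re_inverse_pos[OF re1[OF t]] by (simp only: add_0_left)
    qed
  qed (use z in auto)
  then show ?thesis by simp
qed

lemma Re_Psi_pos:
  assumes "cmod z < 1"
  shows "Re (Psi z) > 0"
proof (cases "z = 0")
  case True then show ?thesis by (simp add: Psi_def)
next
  case False
  have nz: "(cmod z)^2 > 0" using False by simp
  have "Ln (1 + z) / z = (cnj z * Ln (1 + z)) / complex_of_real ((cmod z)^2)"
    using False complex_norm_square[of z] by (simp add: field_simps)
  then have "Re (Ln (1 + z) / z) = Re (cnj z * Ln (1 + z)) / (cmod z)^2"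
    by (simp add: Re_divide_of_real)
  also have "\<dots> > 0" using Re_Ln_pos[OF assms False] nz by simp
  finally have "Re (inverse (Ln (1 + z) / z)) > 0" by (rule Re_inverse_pos)
  then show ?thesis using False by (simp add: Psi_def)
qed

lemma starlike_inj:
  fixes f p :: "complex \<Rightarrow> complex"
  assumes hf: "f holomorphic_on ball 0 1" and hp: "p holomorphic_on ball 0 1" and p0: "p 0 = 1"
    and rep: "\<forall>z\<in>ball 0 1. Re (p z) > 0"
    and eq: "\<forall>z\<in>ball 0 1. z * deriv f z = f z * p z"
    and nz: "\<forall>z\<in>ball 0 1. z \<noteq> 0 \<longrightarrow> f z \<noteq> 0" and f0: "f 0 = 0"
  shows "inj_on f (ball 0 1)"
proof -
  define \<Omega> where "\<Omega> = {\<zeta>::complex. Re \<zeta> < 0}"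
  have cvx: "convex \<Omega>" unfolding \<Omega>_def by (rule convex_halfspace_Re_lt)
  have opn: "open \<Omega>" unfolding \<Omega>_def by (rule open_halfspace_Re_lt)
  have expin: "exp \<zeta> \<in> ball 0 1" if "\<zeta> \<in> \<Omega>" for \<zeta> using that by (simp add: \<Omega>_def)
  define P where "P = (\<lambda>\<zeta>. p (exp \<zeta>))"
  have "(p \<circ> exp) holomorphic_on \<Omega>"
    by (rule holomorphic_on_compose_gen[OF _ hp]) (auto intro: holomorphic_intros expin)
  then have hP: "P holomorphic_on \<Omega>" by (simp add: P_def o_def)
  obtain h where hd0: "\<And>\<zeta>. \<zeta> \<in> \<Omega> \<Longrightarrow> (h has_field_derivative P \<zeta>) (at \<zeta> within \<Omega>)"
    using holomorphic_convex_primitive'[OF cvx opn hP] by blast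
  have hd: "(h has_field_derivative P \<zeta>) (at \<zeta>)" if "\<zeta> \<in> \<Omega>" for \<zeta>
    using hd0[OF that] at_within_open[OF that opn] by simp
  have fd: "(f has_field_derivative deriv f z) (at z)" if "z \<in> ball 0 1" for z
    using hf that by (meson DERIV_deriv_iff_field_differentiable holomorphic_on_imp_differentiable_at open_ball)
  define \<phi> where "\<phi> = (\<lambda>\<zeta>. f (exp \<zeta>) * exp (- h \<zeta>))"
  have \<phi>d: "(\<phi> has_field_derivative 0) (at \<zeta> within \<Omega>)" if "\<zeta> \<in> \<Omega>" for \<zeta>
  proof -
    have d1: "((\<lambda>\<zeta>. f (exp \<zeta>)) has_field_derivative deriv f (exp \<zeta>) * exp \<zeta>) (at \<zeta>)"
      using DERIV_chain2[OF fd[OF expin[OF that]] DERIV_exp] .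
    have d2: "((\<lambda>\<zeta>. exp (- h \<zeta>)) has_field_derivative exp (- h \<zeta>) * (- P \<zeta>)) (at \<zeta>)"
      using DERIV_chain2[OF DERIV_exp DERIV_minus[OF hd[OF that]]] .
    have "(\<phi> has_field_derivative deriv f (exp \<zeta>) * exp \<zeta> * exp (- h \<zeta>) + exp (- h \<zeta>) * (- P \<zeta>) * f (exp \<zeta>)) (at \<zeta>)"
      unfolding \<phi>_def by (rule DERIV_mult[OF d1 d2])
    moreover have "deriv f (exp \<zeta>) * exp \<zeta> * exp (- h \<zeta>) + exp (- h \<zeta>) * (- P \<zeta>) * f (exp \<zeta>)
        = exp (- h \<zeta>) * (exp \<zeta> * deriv f (exp \<zeta>) - f (exp \<zeta>) * p (exp \<zeta>))"
      by (simp add: P_def algebra_simps)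
    moreover have "exp \<zeta> * deriv f (exp \<zeta>) - f (exp \<zeta>) * p (exp \<zeta>) = 0"
      using eq expin[OF that] by simp
    ultimately show ?thesis by (auto intro: has_field_derivative_at_within)
  qed
  obtain C where C: "\<forall>\<zeta>\<in>\<Omega>. \<phi> \<zeta> = C" using has_field_derivative_zero_constant[OF cvx \<phi>d] by blast
  have fexp: "f (exp \<zeta>) = C * exp (h \<zeta>)" if "\<zeta> \<in> \<Omega>" for \<zeta>
  proof -
    have "f (exp \<zeta>) * inverse (exp (h \<zeta>)) = C" using C that by (simp add: \<phi>_def exp_minus)
    then show ?thesis by (simp add: field_simps)
  qed
  have m1: "(-1::complex) \<in> \<Omega>" by (simp add: \<Omega>_def)
  have Cnz: "C \<noteq> 0"
  proof
    assume "C = 0"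
    then have "f (exp (-1)) = 0" using fexp[OF m1] by simp
    moreover have "exp (-1::complex) \<noteq> 0" by simp
    ultimately show False using nz expin[OF m1] by blast
  qed
  have segin: "a + of_real t * (b - a) \<in> \<Omega>" if "a \<in> \<Omega>" "b \<in> \<Omega>" "t \<in> {0..1}" for a b t
  proof -
    have "(1 - t) *\<^sub>R a + t *\<^sub>R b \<in> \<Omega>" by (rule convexD[OF cvx that(1,2)]) (use that(3) in auto)
    moreover have "(1 - t) *\<^sub>R a + t *\<^sub>R b = a + of_real t * (b - a)"
      by (simp add: scaleR_conv_of_real algebra_simps)
    ultimately show ?thesis by simp
  qed
  have hinj: "h a \<noteq> h b" if "a \<in> \<Omega>" "b \<in> \<Omega>" "a \<noteq> b" for a b
  proof -
    have "Re (cnj (b - a) * h a) < Re (cnj (b - a) * h (a + (b - a)))"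
    proof (rule NW_line[where g = h and g' = P])
      show "\<forall>t\<in>{0..1}. (h has_field_derivative P (a + of_real t * (b - a))) (at (a + of_real t * (b - a)))"
        using hd segin[OF that(1,2)] by blast
      show "\<forall>t\<in>{0..1}. 0 < Re (P (a + of_real t * (b - a)))"
      proof
        fix t :: real assume t: "t \<in> {0..1}"
        have "exp (a + of_real t * (b - a)) \<in> ball 0 1" by (rule expin[OF segin[OF that(1,2) t]])
        then show "0 < Re (P (a + of_real t * (b - a)))" using rep by (simp add: P_def)
      qed
    qed (use that in auto)
    then show ?thesis by auto
  qed
  define tp where "tp = 2 * complex_of_real pi * \<i>"
  have shin: "\<zeta> + c * tp \<in> \<Omega>" if "\<zeta> \<in> \<Omega>" "c \<in> \<real>" for \<zeta> c
    using that by (auto simp: \<Omega>_def tp_def elim!: Reals_cases)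
  have exptp: "exp (\<zeta> + tp) = exp \<zeta>" for \<zeta>
    by (simp add: tp_def exp_add)
  define D where "D = (\<lambda>\<zeta>. h (\<zeta> + tp) - h \<zeta>)"
  have Dd: "(D has_field_derivative 0) (at \<zeta> within \<Omega>)" if "\<zeta> \<in> \<Omega>" for \<zeta>
  proof -
    have in2: "\<zeta> + tp \<in> \<Omega>" using shin[OF that, of 1] by simp
    have inner: "((\<lambda>\<zeta>. \<zeta> + tp) has_field_derivative 1) (at \<zeta>)"
      by (rule derivative_eq_intros | simp)+
    have "((\<lambda>\<zeta>. h (\<zeta> + tp)) has_field_derivative P (\<zeta> + tp)) (at \<zeta>)"
      using DERIV_chain2[of h "P (\<zeta> + tp)" "\<lambda>\<zeta>. \<zeta> + tp" \<zeta> 1] hd[OF in2] inner by simp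
    then have "(D has_field_derivative P (\<zeta> + tp) - P \<zeta>) (at \<zeta>)"
      unfolding D_def by (rule DERIV_diff[OF _ hd[OF that]])
    moreover have "P (\<zeta> + tp) - P \<zeta> = 0" by (simp add: P_def exptp)
    ultimately show ?thesis by (auto intro: has_field_derivative_at_within)
  qed
  obtain d where d: "\<forall>\<zeta>\<in>\<Omega>. D \<zeta> = d" using has_field_derivative_zero_constant[OF cvx Dd] by blast
  have m1': "-1 + tp \<in> \<Omega>" using shin[OF m1, of 1] by simp
  have ee: "exp (h (-1 + tp)) = exp (h (-1))"
    using fexp[OF m1] fexp[OF m1'] Cnz exptp[of "-1"] by simp
  have dd: "d = h (-1 + tp) - h (-1)" using d m1 unfolding D_def by auto
  have "exp d = exp 0" unfolding dd exp_diff ee by simp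
  then obtain n :: int where "d = 0 + complex_of_real (real_of_int (2 * n) * pi) * \<i>" unfolding exp_eq by blast
  then have dn: "d = of_int (2 * n) * complex_of_real pi * \<i>" by simp
  have "isCont p 0"
    using holomorphic_on_imp_continuous_on[OF hp] continuous_on_eq_continuous_at[of "ball 0 1" p] by simp
  then have "((\<lambda>z. p z) \<longlongrightarrow> 1) (at 0)" using p0 by (simp add: isCont_def)
  then have "eventually (\<lambda>z. dist (p z) 1 < 1/2) (at 0)" by (rule tendstoD) simp
  then obtain \<delta> where \<delta>: "\<delta> > 0" "\<And>z. z \<noteq> 0 \<Longrightarrow> dist z 0 < \<delta> \<Longrightarrow> dist (p z) 1 < 1/2"
    unfolding eventually_at by auto
  have pclose: "cmod (p z - 1) < 1/2" if "cmod z < \<delta>" for z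
  proof (cases "z = 0")
    case True then show ?thesis using p0 by simp
  next
    case False then show ?thesis using \<delta>(2)[of z] that by (simp add: dist_norm)
  qed
  define \<rho> where "\<rho> = min \<delta> 1 / 2"
  have \<rho>: "0 < \<rho>" "\<rho> < 1" "\<rho> < \<delta>" using \<delta> by (auto simp: \<rho>_def)
  define s where "s = ln \<rho>"
  have s: "s < 0" "exp s = \<rho>" using \<rho> by (auto simp: s_def)
  define z0 where "z0 = complex_of_real s"
  have z0: "z0 \<in> \<Omega>" using s by (simp add: z0_def \<Omega>_def)
  have z0': "z0 + tp \<in> \<Omega>" using shin[OF z0, of 1] by simp
  have segsub: "closed_segment z0 (z0 + tp) \<subseteq> \<Omega>" by (rule closed_segment_subset[OF z0 z0' cvx])
  have I1: "(P has_contour_integral (h (z0 + tp) - h z0)) (linepath z0 (z0 + tp))"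
    using contour_integral_primitive[of \<Omega> h P "linepath z0 (z0 + tp)"] hd0 segsub by simp
  have I2: "((\<lambda>x. 1) has_contour_integral ((z0 + tp) - z0)) (linepath z0 (z0 + tp))"
    using contour_integral_primitive[of UNIV "\<lambda>x. x" "\<lambda>x. 1" "linepath z0 (z0 + tp)"]
    by (auto intro: derivative_eq_intros)
  have I3: "((\<lambda>x. P x - 1) has_contour_integral (d - tp)) (linepath z0 (z0 + tp))"
    using has_contour_integral_diff[OF I1 I2] d z0 by (simp add: D_def)
  have bnd: "cmod (P x - 1) \<le> 1/2" if "x \<in> closed_segment z0 (z0 + tp)" for x
  proof -
    from that obtain u :: real where u: "x = (1 - u) *\<^sub>R z0 + u *\<^sub>R (z0 + tp)" by (auto simp: in_segment)
    have "Re x = s" by (simp add: u z0_def tp_def scaleR_conv_of_real algebra_simps)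
    then have "cmod (exp x) < \<delta>" using s \<rho> by simp
    then show ?thesis using pclose[of "exp x"] by (simp add: P_def)
  qed
  have "cmod (d - tp) \<le> 1/2 * cmod ((z0 + tp) - z0)"
    by (rule has_contour_integral_bound_linepath[OF I3]) (use bnd in auto)
  also have "\<dots> = pi" by (simp add: tp_def norm_mult)
  finally have dle: "cmod (d - tp) \<le> pi" .
  have "d - tp = complex_of_real (2 * pi * (real_of_int n - 1)) * \<i>" by (simp add: dn tp_def algebra_simps)
  moreover have "cmod (complex_of_int n - 1) = \<bar>real_of_int n - 1\<bar>"
    using norm_of_int[of "n - 1", where 'a=complex] by simp
  ultimately have "cmod (d - tp) = 2 * pi * \<bar>real_of_int n - 1\<bar>" by (simp add: norm_mult abs_mult)
  with dle have "\<bar>real_of_int n - 1\<bar> \<le> 1/2" by (simp add: field_simps)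
  then have "n = 1" by linarith
  then have dtp: "d = tp" by (simp add: dn tp_def)
  have hshift: "h (\<zeta> + tp) = h \<zeta> + tp" if "\<zeta> \<in> \<Omega>" for \<zeta>
    using d that dtp by (simp add: D_def algebra_simps)
  have hnat: "h (\<zeta> + of_nat m * tp) = h \<zeta> + of_nat m * tp" if "\<zeta> \<in> \<Omega>" for \<zeta> m
  proof (induction m)
    case 0 then show ?case by simp
  next
    case (Suc m)
    have inm: "\<zeta> + of_nat m * tp \<in> \<Omega>" using shin[OF that, of "of_nat m"] by simp
    have "h (\<zeta> + of_nat (Suc m) * tp) = h ((\<zeta> + of_nat m * tp) + tp)" by (simp add: algebra_simps)
    also have "\<dots> = h (\<zeta> + of_nat m * tp) + tp" by (rule hshift[OF inm])
    finally show ?case using Suc by (simp add: algebra_simps)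
  qed
  have hint: "h (\<zeta> + of_int n * tp) = h \<zeta> + of_int n * tp" if "\<zeta> \<in> \<Omega>" for \<zeta> n
  proof (cases "n \<ge> 0")
    case True
    define m where "m = nat n"
    have "n = int m" using True by (simp add: m_def)
    then show ?thesis using hnat[OF that, of m] by simp
  next
    case False
    define m where "m = nat (- n)"
    have m: "n = - int m" using False by (simp add: m_def)
    have inm: "\<zeta> - of_nat m * tp \<in> \<Omega>" using shin[OF that, of "- of_nat m"] by simp
    have "h ((\<zeta> - of_nat m * tp) + of_nat m * tp) = h (\<zeta> - of_nat m * tp) + of_nat m * tp"
      by (rule hnat[OF inm])
    then show ?thesis using m by (simp add: algebra_simps)
  qed
  show ?thesis
  proof (rule inj_onI)
    fix z1 z2 assume z1: "z1 \<in> ball 0 1" and z2: "z2 \<in> ball 0 1" and feq: "f z1 = f z2"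
    show "z1 = z2"
    proof (cases "z1 = 0 \<or> z2 = 0")
      case True
      show ?thesis
      proof (cases "z1 = 0")
        case a: True
        then have fz: "f z2 = 0" using feq f0 by simp
        have "z2 = 0"
        proof (rule ccontr)
          assume "z2 \<noteq> 0"
          then have "f z2 \<noteq> 0" using nz z2 by blast
          then show False using fz by simp
        qed
        then show ?thesis using a by simp
      next
        case b: False
        then have z20: "z2 = 0" using True by simp
        then have fz: "f z1 = 0" using feq f0 by simp
        have "f z1 \<noteq> 0" using nz z1 b by blast
        then show ?thesis using fz by simp
      qed
    next
      case False
      then have nz1: "z1 \<noteq> 0" and nz2: "z2 \<noteq> 0" by auto
      define \<zeta>1 where "\<zeta>1 = Ln z1"
      define \<zeta>2 where "\<zeta>2 = Ln z2"
      have i1: "\<zeta>1 \<in> \<Omega>" using z1 nz1 by (simp add: \<zeta>1_def \<Omega>_def)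
      have i2: "\<zeta>2 \<in> \<Omega>" using z2 nz2 by (simp add: \<zeta>2_def \<Omega>_def)
      have e1: "exp \<zeta>1 = z1" using nz1 by (simp add: \<zeta>1_def)
      have e2: "exp \<zeta>2 = z2" using nz2 by (simp add: \<zeta>2_def)
      have "C * exp (h \<zeta>1) = C * exp (h \<zeta>2)" using fexp[OF i1] fexp[OF i2] feq e1 e2 by simp
      then have "exp (h \<zeta>1) = exp (h \<zeta>2)" using Cnz by simp
      then obtain n :: int where "h \<zeta>1 = h \<zeta>2 + complex_of_real (real_of_int (2 * n) * pi) * \<i>"
        unfolding exp_eq by blast
      moreover have "complex_of_real (real_of_int (2 * n) * pi) * \<i> = of_int n * tp"
        by (simp add: tp_def)
      ultimately have "h \<zeta>1 = h \<zeta>2 + of_int n * tp" by simp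
      also have "\<dots> = h (\<zeta>2 + of_int n * tp)" by (rule hint[OF i2, symmetric])
      finally have heq: "h \<zeta>1 = h (\<zeta>2 + of_int n * tp)" .
      have "\<zeta>1 = \<zeta>2 + of_int n * tp"
      proof (rule ccontr)
        assume ne: "\<zeta>1 \<noteq> \<zeta>2 + of_int n * tp"
        have "(of_int n :: complex) \<in> \<real>" by simp
        from hinj[OF i1 shin[OF i2 this] ne]
        have "h \<zeta>1 \<noteq> h (\<zeta>2 + of_int n * tp)" .
        then show False using heq by simp
      qed
      moreover have "of_int n * tp = \<i> * (of_int n * (of_real pi * 2))" by (simp add: tp_def algebra_simps)
      ultimately have "exp \<zeta>1 = exp (\<zeta>2 + \<i> * (of_int n * (of_real pi * 2)))" by simp
      then have "exp \<zeta>1 = exp \<zeta>2" by (simp only: exp_plus_2pin)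
      then show ?thesis using e1 e2 by simp
    qed
  qed
qed


lemma Psi0: "Psi 0 = 1" by (simp add: Psi_def)

lemma power_in_ball: "z \<in> ball (0::complex) 1 \<Longrightarrow> 0 < k \<Longrightarrow> z ^ k \<in> ball 0 1"
  by (simp add: norm_power power_less_one_iff)

lemma sharp_exists:
  "\<forall>n\<in>{2..5::nat}. \<exists>f\<in>class_SG. norm (taylor_coeff f n) = 1 / (2 * (real n - 1))"
proof -
  define Q0 where "Q0 = (\<lambda>z. if z = 0 then deriv Psi 0 else (Psi z - Psi 0) / (z - 0))"
  have hQ0: "Q0 holomorphic_on ball 0 1" unfolding Q0_def
    by (rule pole_lemma[OF Psi_holo]) auto
  have Q0eq: "u * Q0 u = Psi u - 1" for u
    by (cases "u = 0") (auto simp: Q0_def Psi0)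
  obtain g where gd0: "\<And>z. z \<in> ball 0 1 \<Longrightarrow> (g has_field_derivative Q0 z) (at z within ball 0 1)"
    using holomorphic_convex_primitive'[OF convex_ball open_ball hQ0] by blast
  define g1 where "g1 = (\<lambda>z. g z - g 0)"
  have g1d: "(g1 has_field_derivative Q0 z) (at z)" if "z \<in> ball 0 1" for z
    using gd0[OF that] at_within_open[OF that open_ball] unfolding g1_def
    by (auto intro!: derivative_eq_intros)
  have g10: "g1 0 = 0" by (simp add: g1_def)
  define F where "F = (\<lambda>(k::nat) z. z * exp (g1 (z ^ k) / of_nat k))"
  have Fd: "(F k has_field_derivative exp (g1 (z ^ k) / of_nat k) * Psi (z ^ k)) (at z)"
    if z: "z \<in> ball 0 1" and k: "k > 0" for k z
  proof -
    have zk: "z ^ k \<in> ball 0 1" by (rule power_in_ball[OF z k])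
    have "((\<lambda>z. z ^ k) has_field_derivative of_nat k * (1 * z ^ (k - Suc 0))) (at z)"
      by (rule DERIV_power[OF DERIV_ident])
    then have dpow: "((\<lambda>z. z ^ k) has_field_derivative of_nat k * z ^ (k - 1)) (at z)" by simp
    have dg: "((\<lambda>z. g1 (z ^ k)) has_field_derivative Q0 (z ^ k) * (of_nat k * z ^ (k - 1))) (at z)"
      using DERIV_chain2[of g1 "Q0 (z ^ k)" "\<lambda>z. z ^ k" z "of_nat k * z ^ (k - 1)"] g1d[OF zk] dpow by simp
    have dq: "((\<lambda>z. g1 (z ^ k) / of_nat k) has_field_derivative Q0 (z ^ k) * (of_nat k * z ^ (k - 1)) / of_nat k) (at z)"
      by (rule DERIV_cdivide[OF dg])
    have de: "((\<lambda>z. exp (g1 (z ^ k) / of_nat k)) has_field_derivative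
        exp (g1 (z ^ k) / of_nat k) * (Q0 (z ^ k) * (of_nat k * z ^ (k - 1)) / of_nat k)) (at z)"
      using DERIV_chain2[OF DERIV_exp dq] .
    have "(F k has_field_derivative
        1 * exp (g1 (z ^ k) / of_nat k) + z * (exp (g1 (z ^ k) / of_nat k) * (Q0 (z ^ k) * (of_nat k * z ^ (k - 1)) / of_nat k))) (at z)"
      using DERIV_mult[OF DERIV_ident de] unfolding F_def by (simp add: mult.commute)
    moreover have "1 * exp (g1 (z ^ k) / of_nat k) + z * (exp (g1 (z ^ k) / of_nat k) * (Q0 (z ^ k) * (of_nat k * z ^ (k - 1)) / of_nat k))
        = exp (g1 (z ^ k) / of_nat k) * (1 + z ^ k * Q0 (z ^ k))"
    proof -
      have "z * z ^ (k - 1) = z ^ k" using k by (simp add: power_eq_if)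
      then show ?thesis using k by (simp add: field_simps)
    qed
    ultimately show ?thesis by (simp add: Q0eq)
  qed
  have Fhol: "F k holomorphic_on ball 0 1" if k: "k > 0" for k
    unfolding holomorphic_on_open[OF open_ball] using Fd[OF _ k] by blast
  have Fderiv: "deriv (F k) z = exp (g1 (z ^ k) / of_nat k) * Psi (z ^ k)" if "z \<in> ball 0 1" "k > 0" for k z
    by (rule DERIV_imp_deriv[OF Fd[OF that]])
  have F0: "F k 0 = 0" for k by (simp add: F_def)
  have Fd0: "deriv (F k) 0 = 1" if k: "k > 0" for k
    using Fderiv[of 0 k] k g10 by (simp add: Psi0 zero_power)
  have Feq: "\<forall>z\<in>ball 0 1. z * deriv (F k) z = F k z * Psi (z ^ k)" if k: "k > 0" for k
    using Fderiv k by (simp add: F_def mult_ac)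
  have Fnz: "\<forall>z\<in>ball 0 1. z \<noteq> 0 \<longrightarrow> F k z \<noteq> 0" for k by (simp add: F_def)
  have Fsq: "\<forall>z\<in>ball 0 1. starlike_quot (F k) z = Psi (z ^ k)" if k: "k > 0" for k
  proof
    fix z :: complex assume z: "z \<in> ball 0 1"
    show "starlike_quot (F k) z = Psi (z ^ k)"
    proof (cases "z = 0")
      case True then show ?thesis using k by (simp add: starlike_quot_def Psi0 zero_power)
    next
      case False
      have "F k z \<noteq> 0" using Fnz False z by blast
      then show ?thesis using False Feq[OF k] z by (simp add: starlike_quot_def field_simps)
    qed
  qed
  have inj1: "inj_on (F 1) (ball 0 1)"
  proof (rule starlike_inj[OF Fhol Psi_holo Psi0])
    show "\<forall>z\<in>ball 0 1. 0 < Re (Psi z)" using Re_Psi_pos by simp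
    show "\<forall>z\<in>ball 0 1. z * deriv (F 1) z = F 1 z * Psi z" using Feq[of 1] by simp
  qed (use Fnz F0 in auto)
  have Fpow: "(F k z) ^ k = F 1 (z ^ k)" if k: "k > 0" for k z
  proof -
    have "exp (g1 (z ^ k) / of_nat k) ^ k = exp (of_nat k * (g1 (z ^ k) / of_nat k))"
      by (rule exp_of_nat_mult[symmetric])
    also have "\<dots> = exp (g1 (z ^ k))" using k by simp
    finally show ?thesis by (simp add: F_def power_mult_distrib)
  qed
  have injk: "inj_on (F k) (ball 0 1)" if k: "k > 0" for k
  proof (rule inj_onI)
    fix z1 z2 assume z1: "z1 \<in> ball 0 1" and z2: "z2 \<in> ball 0 1" and eq: "F k z1 = F k z2"
    have "F 1 (z1 ^ k) = F 1 (z2 ^ k)" using eq Fpow[OF k, of z1] Fpow[OF k, of z2] by simp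
    then have zk: "z1 ^ k = z2 ^ k"
      using inj1 power_in_ball[OF z1 k] power_in_ball[OF z2 k] by (auto dest: inj_onD)
    then have "z1 * exp (g1 (z1 ^ k) / of_nat k) = z2 * exp (g1 (z1 ^ k) / of_nat k)"
      using eq by (simp add: F_def)
    then show "z1 = z2" by simp
  qed
  have SG: "F k \<in> class_SG" if k: "k > 0" for k
    unfolding class_SG_def class_S_def subordinate_def
  proof (intro CollectI conjI exI[of _ "\<lambda>z. z ^ k"] ballI)
    show "(\<lambda>z. z ^ k) holomorphic_on ball 0 1" by (intro holomorphic_intros)
  qed (use Fhol[OF k] injk[OF k] F0 Fd0[OF k] k Fsq[OF k] power_in_ball[OF _ k] in \<open>auto simp: zero_power\<close>)
  have tck: "taylor_coeff (\<lambda>z. z ^ k) j = (if j = k then 1 else 0)" for k j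
    using taylor_coeff_fps[OF has_fps_expansion_fps_X_power[of k], of j] by simp
  have wh: "(\<lambda>z. z ^ k) holomorphic_on ball 0 1" for k :: nat by (intro holomorphic_intros)
  note cf = coeff_formulas[OF Fhol F0 Fd0 wh _ Feq]
  show ?thesis
  proof
    fix n :: nat assume "n \<in> {2..5}"
    then have "n = 2 \<or> n = 3 \<or> n = 4 \<or> n = 5" by auto
    then show "\<exists>f\<in>class_SG. norm (taylor_coeff f n) = 1 / (2 * (real n - 1))"
    proof (elim disjE)
      assume n: "n = 2"
      have t1: "taylor_coeff (\<lambda>z. z) 1 = 1" using tck[of 1 1] by simp
      have c: "taylor_coeff (F 1) 2 = 1/2" using cf(1)[of 1] t1 by simp
      have "norm (taylor_coeff (F 1) 2) = 1 / (2 * (real n - 1))" unfolding n c by simp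
      then show ?thesis using SG[of 1] n by (intro bexI[of _ "F 1"]) auto
    next
      assume n: "n = 3"
      have c: "taylor_coeff (F 2) 3 = 1/4" using cf(2)[of 2] by (simp add: tck)
      have "norm (taylor_coeff (F 2) 3) = 1 / (2 * (real n - 1))" unfolding n c by simp
      then show ?thesis using SG[of 2] n by (intro bexI[of _ "F 2"]) auto
    next
      assume n: "n = 4"
      have c: "taylor_coeff (F 3) 4 = 1/6" using cf(3)[of 3] by (simp add: tck)
      have "norm (taylor_coeff (F 3) 4) = 1 / (2 * (real n - 1))" unfolding n c by simp
      then show ?thesis using SG[of 3] n by (intro bexI[of _ "F 3"]) auto
    next
      assume n: "n = 5"
      have c: "taylor_coeff (F 4) 5 = 1/8" using cf(4)[of 4] by (simp add: tck)
      have "norm (taylor_coeff (F 4) 5) = 1 / (2 * (real n - 1))" unfolding n c by simp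
      then show ?thesis using SG[of 4] n by (intro bexI[of _ "F 4"]) auto
    qed
  qed
qed


theorem theorem1:
  shows "(\<forall>f\<in>class_SG.
            (\<forall>n\<in>{2..5::nat}. norm (taylor_coeff f n) \<le> 1 / (2 * (real n - 1))) \<and>
            norm (taylor_coeff f 6) \<le> 13 / 48)
       \<and> (\<forall>n\<in>{2..5::nat}. \<exists>f\<in>class_SG. norm (taylor_coeff f n) = 1 / (2 * (real n - 1)))"
    using upper_bounds sharp_exists by blast

end
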